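(* Let $(\Omega,\mathcal A)$ be a Borel space, $(\Omega,X_\bullet)$ a Borel field of complete metric spaces, and $F_\bullet$ a subfield with $F_\omega$ closed in $X_\omega$ for every $\omega$. The following are equivalent: (i) $F_\bullet$ is a Borel subfield; (ii) $\omega\mapsto d_\omega(x_\omega,F_\omega)\in[0,\infty]$ is Borel for every $x_\bullet\in\mathcal L(\Omega,X_\bullet)$; (iii) $\omega\mapsto d_\omega(x_\omega,F_\omega)$ is Borel for every $x_\bullet$ in some fundamental family $\mathcal D$ of $\mathcal L(\Omega,X_\bullet)$. (Convention: $d(x,\emptyset)=\infty$.)
   Context: Borel field of metric spaces: $(X_\omega,d_\omega)_{\omega\in\Omega}$ metric spaces; a section is $x_\bullet=(x_\omega)$, $x_\omega\in X_\omega$. A Borel structure is a set $\mathcal L(\Omega,X_\bullet)$ of sections such that (a) $\omega\mapsto d_\omega(x_\omega,y_\omega)$ is Borel for all $x_\bullet,y_\bullet\in\mathcal L$; (b) any section $y_\bullet$ with $\omega\mapsto d_\omega(x_\omega,y_\omega)$ Borel for all $x_\bullet\in\mathcal L$ lies in $\mathcal L$; (c) there is a countable $\mathcal D=\{x^n_\bullet\}\subseteq\mathcal L$ (fundamental family) with $\{x^n_\omega\}_n$ dense in $X_\omega$ for all $\omega$. For Borel $\Omega'$, $\mathcal L(\Omega',X_\bullet)$ = restrictions to $\Omega'$ of Borel sections. A subfield is $A_\bullet=(A_\omega)$ with $A_\omega\subseteq X_\omega$ (possibly empty); it is Borel if $\Omega'=\{\omega:A_\omega\ne\emptyset\}\in\mathcal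 A$ and there are countably many $y^n_\bullet\in\mathcal L(\Omega',X_\bullet)$ with $y^n_\omega\in A_\omega$ and $A_\omega\subseteq\overline{\{y^n_\omega\}_n}$ for all $\omega\in\Omega'$. *)

theory Defs
  imports "HOL-Analysis.Analysis"
begin

text \<open>Ambient carrier type 'x; fibre X w is a set with metric d w.
  Omega = space M, A = sets M.\<close>

definition is_section :: "'w measure \<Rightarrow> ('w \<Rightarrow> 'x set) \<Rightarrow> ('w \<Rightarrow> 'x) \<Rightarrow> bool" where
  "is_section M X x \<longleftrightarrow> (\<forall>w\<in>space M. x w \<in> X w)"

definition dense_in :: "('x \<Rightarrow> 'x \<Rightarrow> real) \<Rightarrow> 'x set \<Rightarrow> 'x set \<Rightarrow> bool" where
  "dense_in d A S \<longleftrightarrow> (\<forall>p\<in>S. \<forall>e>0. \<exists>q\<in>A. d q p < e)"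

definition fundamental_family ::
  "'w measure \<Rightarrow> ('w \<Rightarrow> 'x set) \<Rightarrow> ('w \<Rightarrow> 'x \<Rightarrow> 'x \<Rightarrow> real) \<Rightarrow> ('w \<Rightarrow> 'x) set \<Rightarrow> ('w \<Rightarrow> 'x) set \<Rightarrow> bool" where
  "fundamental_family M X d L D \<longleftrightarrow> countable D \<and> D \<subseteq> L \<and>
     (\<forall>w\<in>space M. dense_in (d w) ((\<lambda>x. x w) ` D) (X w))"

definition borel_structure ::
  "'w measure \<Rightarrow> ('w \<Rightarrow> 'x set) \<Rightarrow> ('w \<Rightarrow> 'x \<Rightarrow> 'x \<Rightarrow> real) \<Rightarrow> ('w \<Rightarrow> 'x) set \<Rightarrow> bool" where
  "borel_structure M X d L \<longleftrightarrow>
     (\<forall>x\<in>L. is_section M X x) \<and>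
     (\<forall>x\<in>L. \<forall>y\<in>L. (\<lambda>w. d w (x w) (y w)) \<in> borel_measurable M) \<and>
     (\<forall>y. is_section M X y \<and> (\<forall>x\<in>L. (\<lambda>w. d w (x w) (y w)) \<in> borel_measurable M) \<longrightarrow> y \<in> L) \<and>
     (\<exists>D. fundamental_family M X d L D)"

definition borel_field ::
  "'w measure \<Rightarrow> ('w \<Rightarrow> 'x set) \<Rightarrow> ('w \<Rightarrow> 'x \<Rightarrow> 'x \<Rightarrow> real) \<Rightarrow> ('w \<Rightarrow> 'x) set \<Rightarrow> bool" where
  "borel_field M X d L \<longleftrightarrow> (\<forall>w\<in>space M. Metric_space (X w) (d w)) \<and> borel_structure M X d L"

definition borel_sections_on ::
  "'w set \<Rightarrow> ('w \<Rightarrow> 'x) set \<Rightarrow> ('w \<Rightarrow> 'x) set" where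
  "borel_sections_on \<Omega>' L = {y. \<exists>z\<in>L. \<forall>w\<in>\<Omega>'. y w = z w}"

definition borel_subfield ::
  "'w measure \<Rightarrow> ('w \<Rightarrow> 'x set) \<Rightarrow> ('w \<Rightarrow> 'x \<Rightarrow> 'x \<Rightarrow> real) \<Rightarrow> ('w \<Rightarrow> 'x) set \<Rightarrow> ('w \<Rightarrow> 'x set) \<Rightarrow> bool" where
  "borel_subfield M X d L A \<longleftrightarrow>
     (let \<Omega>' = {w\<in>space M. A w \<noteq> {}} in
       \<Omega>' \<in> sets M \<and>
       (\<exists>Y. countable Y \<and> Y \<subseteq> borel_sections_on \<Omega>' L \<and>
            (\<forall>y\<in>Y. \<forall>w\<in>\<Omega>'. y w \<in> A w) \<and>
            (\<forall>w\<in>\<Omega>'. dense_in (d w) ((\<lambda>y. y w) ` Y) (A w))))"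

text \<open>Distance from a point to a set in [0,\<infinity>]; the infimum over the empty set is \<infinity>.\<close>
definition setdist_e :: "('x \<Rightarrow> 'x \<Rightarrow> real) \<Rightarrow> 'x \<Rightarrow> 'x set \<Rightarrow> ennreal" where
  "setdist_e d p S = (INF q\<in>S. ennreal (d p q))"

end

theory Submission
  imports Defs
begin

definition sdr :: "('x \<Rightarrow> 'x \<Rightarrow> real) \<Rightarrow> 'x \<Rightarrow> 'x set \<Rightarrow> real" where
  "sdr d p S = enn2real (setdist_e d p S)"

context Metric_space
begin

lemma setdist_le: "q \<in> S \<Longrightarrow> setdist_e d p S \<le> ennreal (d p q)"
  unfolding setdist_e_def by (rule INF_lower)

lemma setdist_empty: "setdist_e d p {} = top"
  unfolding setdist_e_def by simp

lemma setdist_fin: "S \<noteq> {} \<Longrightarrow> setdist_e d p S = ennreal (sdr d p S)"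
proof -
  assume "S \<noteq> {}" then obtain q where "q \<in> S" by auto
  then have "setdist_e d p S < top"
    using setdist_le[of q S p] by (simp add: le_less_trans)
  then show ?thesis unfolding sdr_def by simp
qed

lemma sdr_nonneg: "0 \<le> sdr d p S"
  unfolding sdr_def by simp

lemma sdr_le: "q \<in> S \<Longrightarrow> sdr d p S \<le> d p q"
proof -
  assume q: "q \<in> S"
  have e: "setdist_e d p S = ennreal (sdr d p S)" using q setdist_fin by blast
  then have "ennreal (sdr d p S) \<le> ennreal (d p q)"
    using setdist_le[OF q, of p] by simp
  then show ?thesis by (simp add: ennreal_le_iff)
qed

lemma sdr_approx:
  assumes "S \<noteq> {}" "e > 0"
  shows "\<exists>q\<in>S. d p q < sdr d p S + e"
proof -
  have "setdist_e d p S < ennreal (sdr d p S + e)"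
    using setdist_fin[OF assms(1), of p] assms(2) sdr_nonneg[of p S]
    by (simp add: ennreal_lessI)
  then obtain q where "q \<in> S" "ennreal (d p q) < ennreal (sdr d p S + e)"
    unfolding setdist_e_def by (auto simp: INF_less_iff)
  then show ?thesis
    by (metis ennreal_less_iff nonneg)
qed

lemma sdr_lip:
  assumes "S \<noteq> {}" "S \<subseteq> M" "p \<in> M" "v \<in> M"
  shows "sdr d p S \<le> d p v + sdr d v S"
proof (rule field_le_epsilon)
  fix e :: real assume "e > 0"
  then obtain q where q: "q \<in> S" "d v q < sdr d v S + e" using sdr_approx assms by blast
  have "sdr d p S \<le> d p q" by (rule sdr_le[OF q(1)])
  also have "\<dots> \<le> d p v + d v q" using triangle assms q by auto
  finally show "sdr d p S \<le> d p v + sdr d v S + e" using q by simp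
qed

lemma sdr_zero_closed:
  assumes "closedin mtopology S" "p \<in> M" "S \<noteq> {}" "sdr d p S = 0"
  shows "p \<in> S"
proof (rule ccontr)
  assume "p \<notin> S"
  then obtain r where r: "r > 0" "disjnt S (mball p r)"
    using assms(1,2) unfolding closedin_metric by blast
  obtain q where q: "q \<in> S" "d p q < r" using sdr_approx[OF assms(3) r(1), of p] assms(4) by auto
  have "q \<in> M" using q(1) assms(1) closedin_subset by fastforce
  then show False using r q assms(2) by (auto simp: disjnt_def)
qed

lemma setdist_lip:
  assumes "S \<subseteq> M" "p \<in> M" "v \<in> M"
  shows "setdist_e d p S \<le> ennreal (d p v) + setdist_e d v S"
proof (cases "S = {}")
  case True then show ?thesis by (simp add: setdist_empty)
next
  case False
  then show ?thesis using sdr_lip[OF False assms] setdist_fin[OF False]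
    by (simp add: ennreal_plus[symmetric] sdr_nonneg ennreal_leI del: ennreal_plus)
qed

lemma setdist_dense:
  assumes "S \<subseteq> M" "p \<in> M" "T \<subseteq> S" "dense_in d T S"
  shows "setdist_e d p S = (INF q\<in>T. ennreal (d p q))"
proof (rule antisym)
  show "setdist_e d p S \<le> (INF q\<in>T. ennreal (d p q))"
    unfolding setdist_e_def using assms(3) by (rule INF_superset_mono) auto
  show "(INF q\<in>T. ennreal (d p q)) \<le> setdist_e d p S"
    unfolding setdist_e_def
  proof (rule INF_greatest)
    fix q assume q: "q \<in> S"
    show "(INF q\<in>T. ennreal (d p q)) \<le> ennreal (d p q)"
    proof (rule ennreal_le_epsilon)
      fix e :: real assume "e > 0"
      then obtain t where t: "t \<in> T" "d t q < e" using assms(4) q unfolding dense_in_def by blast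
      have "t \<in> M" "q \<in> M" using t q assms by auto
      then have "d p t \<le> d p q + d q t" using triangle assms by auto
      also have "\<dots> \<le> d p q + e" using t commute by (simp add: less_imp_le)
      finally have "ennreal (d p t) \<le> ennreal (d p q) + ennreal e"
        using \<open>e>0\<close> by (simp add: ennreal_plus[symmetric] ennreal_leI del: ennreal_plus)
      moreover have "(INF q\<in>T. ennreal (d p q)) \<le> ennreal (d p t)" by (rule INF_lower[OF t(1)])
      ultimately show "(INF q\<in>T. ennreal (d p q)) \<le> ennreal (d p q) + ennreal e" by order
    qed
  qed
qed

lemma setdist_via_dense:
  assumes "S \<subseteq> M" "p \<in> M" "T \<subseteq> M" "dense_in d T M"
  shows "setdist_e d p S = (INF v\<in>T. ennreal (d p v) + setdist_e d v S)"
proof (rule antisym)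
  show "setdist_e d p S \<le> (INF v\<in>T. ennreal (d p v) + setdist_e d v S)"
    by (rule INF_greatest) (use assms setdist_lip in blast)
  show "(INF v\<in>T. ennreal (d p v) + setdist_e d v S) \<le> setdist_e d p S"
    unfolding setdist_e_def[of d p S]
  proof (rule INF_greatest)
    fix q assume q: "q \<in> S"
    show "(INF v\<in>T. ennreal (d p v) + setdist_e d v S) \<le> ennreal (d p q)"
    proof (rule ennreal_le_epsilon)
      fix e :: real assume "e > 0"
      then obtain t where t: "t \<in> T" "d t p < e/2" using assms(4) assms(2) unfolding dense_in_def
        by (meson half_gt_zero)
      have "t \<in> M" "q \<in> M" using t q assms by auto
      then have "d t q \<le> d t p + d p q" using triangle assms by auto
      have "ennreal (d p t) + setdist_e d t S \<le> ennreal (d p t) + ennreal (d t q)"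
        using setdist_le[OF q] by (rule add_left_mono)
      also have "\<dots> = ennreal (d p t + d t q)" by (simp add: ennreal_plus)
      also have "\<dots> \<le> ennreal (d p q + e)"
        using \<open>d t q \<le> d t p + d p q\<close> t commute[of p t] by (intro ennreal_leI) simp
      also have "\<dots> = ennreal (d p q) + ennreal e" using \<open>e>0\<close> by (simp add: ennreal_plus)
      finally have "ennreal (d p t) + setdist_e d t S \<le> ennreal (d p q) + ennreal e" .
      moreover have "(INF v\<in>T. ennreal (d p v) + setdist_e d v S) \<le> ennreal (d p t) + setdist_e d t S"
        by (rule INF_lower[OF t(1)])
      ultimately show "(INF v\<in>T. ennreal (d p v) + setdist_e d v S) \<le> ennreal (d p q) + ennreal e" by order
    qed
  qed
qed

lemma dist_limit:
  assumes "limitin mtopology \<sigma> l sequentially" "a \<in> M"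
  shows "(\<lambda>k. d a (\<sigma> k)) \<longlonglongrightarrow> d a l"
  unfolding tendsto_iff
proof (intro allI impI)
  fix e :: real assume "e > 0"
  have lM: "l \<in> M" using assms(1) limitin_mspace by blast
  have "eventually (\<lambda>k. \<sigma> k \<in> M \<and> d (\<sigma> k) l < e) sequentially"
    using assms(1) \<open>e>0\<close> unfolding limitin_metric by blast
  then show "eventually (\<lambda>k. dist (d a (\<sigma> k)) (d a l) < e) sequentially"
  proof (rule eventually_mono)
    fix k assume k: "\<sigma> k \<in> M \<and> d (\<sigma> k) l < e"
    have "d a (\<sigma> k) \<le> d a l + d l (\<sigma> k)" "d a l \<le> d a (\<sigma> k) + d (\<sigma> k) l"
      using triangle k lM assms(2) by auto
    then show "dist (d a (\<sigma> k)) (d a l) < e" using k commute[of l "\<sigma> k"]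
      by (simp add: dist_real_def abs_less_iff)
  qed
qed


lemma iterate_limit:
  assumes comp: "mcomplete" and cl: "closedin mtopology S" and ne: "S \<noteq> {}" and c: "c > 0"
    and zM: "\<And>k. z k \<in> M"
    and h1: "\<And>k. sdr d (z (Suc k)) S < c / 2 ^ Suc k"
    and h2: "\<And>k. d (z (Suc k)) (z k) < sdr d (z k) S + c / 2 ^ k"
  shows "\<exists>l\<in>S. limitin mtopology z l sequentially \<and> d (z 0) l \<le> sdr d (z 0) S + 3 * c"
proof -
  have SM: "S \<subseteq> M" using cl closedin_subset by fastforce
  define u where "u k = z (Suc k)" for k
  have uM: "u k \<in> M" for k using zM u_def by simp
  have st: "d (u (Suc k)) (u k) < c / 2 ^ k" for k
  proof -
    have "d (u (Suc k)) (u k) < sdr d (u k) S + c / 2 ^ Suc k" using h2[of "Suc k"] u_def by simp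
    also have "\<dots> < c / 2 ^ Suc k + c / 2 ^ Suc k" using h1[of k] u_def by simp
    also have "\<dots> = c / 2 ^ k" by simp
    finally show ?thesis .
  qed
  have bnd: "d (u k) (u (k + j)) \<le> 2 * c / 2 ^ k - 2 * c / 2 ^ (k + j)" for k j
  proof (induction j)
    case 0 then show ?case using uM by simp
  next
    case (Suc j)
    have "d (u k) (u (k + Suc j)) \<le> d (u k) (u (k + j)) + d (u (k + j)) (u (k + Suc j))"
      using triangle uM by simp
    also have "\<dots> \<le> 2 * c / 2 ^ k - 2 * c / 2 ^ (k + j) + c / 2 ^ (k + j)"
      using Suc st[of "k + j"] commute[of "u (k + j)"] by simp
    also have "\<dots> = 2 * c / 2 ^ k - 2 * c / 2 ^ (k + Suc j)"
    proof -
      have "(2::real) ^ (k + Suc j) = 2 * 2 ^ (k + j)" by simp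
      then show ?thesis by (simp add: divide_simps)
    qed
    finally show ?case .
  qed
  have bnd2: "d (u k) (u m) \<le> 2 * c / 2 ^ k" if km: "k \<le> m" for k m
  proof -
    obtain j where "m = k + j" using le_Suc_ex[OF km] by blast
    moreover have "0 \<le> 2 * c / 2 ^ (k + j)" using c by simp
    ultimately show ?thesis using bnd[of k j] by simp
  qed
  have small: "\<exists>N. 2 * c / 2 ^ N < e" if "e > 0" for e :: real
  proof -
    have "\<exists>N. 2 * c / e < (2::real) ^ N" by (rule real_arch_pow) simp
    then obtain N where "2 * c / e < 2 ^ N" by blast
    then have "2 * c < e * 2 ^ N" using that by (simp add: field_simps)
    then show ?thesis by (intro exI[of _ N]) (simp add: field_simps)
  qed
  have "MCauchy u"
    unfolding MCauchy_def
  proof (intro conjI allI impI)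
    show "range u \<subseteq> M" using uM by auto
    fix e :: real assume "e > 0"
    then obtain N where N: "2 * c / 2 ^ N < e" using small by blast
    have mono: "2 * c / 2 ^ n \<le> 2 * c / 2 ^ N" if Nn: "N \<le> n" for n
      by (rule divide_left_mono) (use c power_increasing[OF Nn, of "2::real"] in auto)
    show "\<exists>N. \<forall>n n'. N \<le> n \<longrightarrow> N \<le> n' \<longrightarrow> d (u n) (u n') < e"
    proof (intro exI allI impI)
      fix n n' assume "N \<le> n" "N \<le> n'"
      show "d (u n) (u n') < e"
      proof (cases "n \<le> n'")
        case True then show ?thesis using bnd2[OF True] mono[OF \<open>N \<le> n\<close>] N by linarith
      next
        case False
        then have "d (u n') (u n) \<le> 2 * c / 2 ^ n'" using bnd2[of n' n] by simp
        moreover have "d (u n) (u n') = d (u n') (u n)" by (rule commute)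
        ultimately show ?thesis using mono[OF \<open>N \<le> n'\<close>] N by linarith
      qed
    qed
  qed
  then obtain l where lu: "limitin mtopology u l sequentially" using comp unfolding mcomplete_def by blast
  have lM: "l \<in> M" using limitin_mspace[OF lu] .
  have lz: "limitin mtopology z l sequentially"
  proof -
    have "limitin mtopology (\<lambda>i. z (i + 1)) l sequentially" using lu by (simp add: u_def[abs_def])
    then show ?thesis by (rule limitin_sequentially_offset_rev)
  qed
  have close: "\<exists>k. d (u k) l < e" if "e > 0" for e
  proof -
    have "eventually (\<lambda>k. u k \<in> M \<and> d (u k) l < e) sequentially"
      using lu that unfolding limitin_metric by blast
    then obtain K where "\<And>k. K \<le> k \<Longrightarrow> u k \<in> M \<and> d (u k) l < e"
      unfolding eventually_sequentially by blast
    then show ?thesis by blast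
  qed
  have "sdr d l S \<le> 0"
  proof (rule field_le_epsilon)
    fix e :: real assume "e > 0"
    obtain N where N: "2 * c / 2 ^ N < e / 2" using small \<open>e>0\<close> by (meson half_gt_zero)
    obtain k' where k': "d (u k') l < e / 2" "N \<le> k'"
    proof -
      have "eventually (\<lambda>k. u k \<in> M \<and> d (u k) l < e/2) sequentially"
        using lu \<open>e>0\<close> unfolding limitin_metric by (meson half_gt_zero)
      then obtain K where "\<And>k. K \<le> k \<Longrightarrow> d (u k) l < e / 2" by (auto simp: eventually_sequentially)
      then show ?thesis using that[of "max K N"] by simp
    qed
    have a: "sdr d l S \<le> d l (u k') + sdr d (u k') S" using sdr_lip ne SM lM uM by blast
    have b: "sdr d (u k') S < c / 2 ^ Suc k'" using h1[of k'] u_def by simp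
    have c0: "c / 2 ^ Suc k' \<le> c / 2 ^ N"
      by (rule divide_left_mono) (use c power_increasing[of N "Suc k'" "2::real"] k'(2) in auto)
    have "0 \<le> c / 2 ^ N" using c by simp
    then have c1: "c / 2 ^ Suc k' \<le> 2 * c / 2 ^ N" using c0 by simp
    have "d l (u k') = d (u k') l" by (rule commute)
    then show "sdr d l S \<le> 0 + e" using a b c1 k' N by linarith
  qed
  then have lS: "l \<in> S" using sdr_zero_closed[OF cl lM ne] sdr_nonneg[of l S] by simp
  have "d (z 0) l \<le> sdr d (z 0) S + 3 * c"
  proof (rule field_le_epsilon)
    fix e :: real assume "e > 0"
    then obtain k where k: "d (u k) l < e" using close by blast
    have a: "d (z 0) l \<le> d (z 0) (u 0) + d (u 0) l" using triangle zM uM lM by blast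
    have b: "d (u 0) l \<le> d (u 0) (u k) + d (u k) l" using triangle uM lM by blast
    have c1: "d (u 0) (u k) \<le> 2 * c" using bnd2[of 0 k] by simp
    have c2: "d (z 0) (u 0) = d (z (Suc 0)) (z 0)" using commute u_def by simp
    have c3: "d (z (Suc 0)) (z 0) < sdr d (z 0) S + c" using h2[of 0] by simp
    show "d (z 0) l \<le> sdr d (z 0) S + 3 * c + e" using a b c1 c2 c3 k by linarith
  qed
  then show ?thesis using lS lz by blast
qed

end

lemma basic_facts:
  assumes field: "borel_field M X d L"
  shows "\<And>w. w \<in> space M \<Longrightarrow> Metric_space (X w) (d w)"
    and "\<And>x w. x \<in> L \<Longrightarrow> w \<in> space M \<Longrightarrow> x w \<in> X w"
    and "\<And>x y. x \<in> L \<Longrightarrow> y \<in> L \<Longrightarrow> (\<lambda>w. d w (x w) (y w)) \<in> borel_measurable M"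
    and "\<And>y. (\<And>w. w \<in> space M \<Longrightarrow> y w \<in> X w) \<Longrightarrow>
           (\<And>x. x \<in> L \<Longrightarrow> (\<lambda>w. d w (x w) (y w)) \<in> borel_measurable M) \<Longrightarrow> y \<in> L"
    and "\<exists>D. fundamental_family M X d L D"
  using field unfolding borel_field_def borel_structure_def is_section_def by blast+

lemma i_ii:
  assumes field: "borel_field M X d L"
    and closed: "\<forall>w\<in>space M. closedin (Metric_space.mtopology (X w) (d w)) (F w)"
    and bsf: "borel_subfield M X d L F" and xL: "x \<in> L"
  shows "(\<lambda>w. setdist_e (d w) (x w) (F w)) \<in> borel_measurable M"
proof -
  note bf = basic_facts[OF field]
  define \<Omega>' where "\<Omega>' = {w\<in>space M. F w \<noteq> {}}"
  have FX: "F w \<subseteq> X w" if "w \<in> space M" for w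
    using closed that closedin_subset Metric_space.topspace_mtopology[OF bf(1)[OF that]] by metis
  obtain Y where \<Omega>m: "\<Omega>' \<in> sets M" and Yc: "countable Y" and YL: "Y \<subseteq> borel_sections_on \<Omega>' L"
    and YF: "\<forall>y\<in>Y. \<forall>w\<in>\<Omega>'. y w \<in> F w" and Yd: "\<forall>w\<in>\<Omega>'. dense_in (d w) ((\<lambda>y. y w) ` Y) (F w)"
    using bsf unfolding borel_subfield_def Let_def \<Omega>'_def by blast
  have "\<forall>y\<in>Y. \<exists>z. z \<in> L \<and> (\<forall>w\<in>\<Omega>'. y w = z w)"
    using YL unfolding borel_sections_on_def by blast
  then obtain zz where zz: "\<And>y. y \<in> Y \<Longrightarrow> zz y \<in> L \<and> (\<forall>w\<in>\<Omega>'. y w = zz y w)"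
    by metis
  define g where "g w = (if w \<in> \<Omega>' then (INF y\<in>Y. ennreal (d w (x w) (zz y w))) else top)" for w
  have eq: "setdist_e (d w) (x w) (F w) = g w" if w: "w \<in> space M" for w
  proof (cases "w \<in> \<Omega>'")
    case True
    interpret Metric_space "X w" "d w" using bf(1)[OF w] .
    have "setdist_e (d w) (x w) (F w) = (INF q\<in>(\<lambda>y. y w) ` Y. ennreal (d w (x w) q))"
      using True YF Yd FX[OF w] bf(2)[OF xL w] by (intro setdist_dense) auto
    also have "\<dots> = (INF y\<in>Y. ennreal (d w (x w) (zz y w)))"
      unfolding image_image using zz True by (intro INF_cong) auto
    finally show ?thesis using True g_def by simp
  next
    case False
    then have "F w = {}" using w \<Omega>'_def by auto
    then show ?thesis using False g_def by (simp add: setdist_e_def)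
  qed
  have [measurable]: "\<And>y. y \<in> Y \<Longrightarrow> (\<lambda>w. d w (x w) (zz y w)) \<in> borel_measurable M"
    using zz bf(3) xL by blast
  have "g \<in> borel_measurable M"
    unfolding g_def
  proof (rule measurable_If_set)
    show "(\<lambda>w. INF y\<in>Y. ennreal (d w (x w) (zz y w))) \<in> borel_measurable M"
      using Yc by measurable
    show "\<Omega>' \<inter> space M \<in> sets M" using \<Omega>m \<Omega>'_def by (simp add: Int_absorb2)
  qed simp
  then show ?thesis using eq by (simp cong: measurable_cong)
qed

lemma iii_ii:
  assumes field: "borel_field M X d L"
    and closed: "\<forall>w\<in>space M. closedin (Metric_space.mtopology (X w) (d w)) (F w)"
    and fund: "fundamental_family M X d L D"
    and Dm: "\<forall>x\<in>D. (\<lambda>w. setdist_e (d w) (x w) (F w)) \<in> borel_measurable M"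
    and xL: "x \<in> L"
  shows "(\<lambda>w. setdist_e (d w) (x w) (F w)) \<in> borel_measurable M"
proof -
  note bf = basic_facts[OF field]
  have FX: "F w \<subseteq> X w" if "w \<in> space M" for w
    using closed that closedin_subset Metric_space.topspace_mtopology[OF bf(1)[OF that]] by metis
  have Dc: "countable D" and DL: "D \<subseteq> L" and Dd: "\<forall>w\<in>space M. dense_in (d w) ((\<lambda>x. x w) ` D) (X w)"
    using fund unfolding fundamental_family_def by auto
  have eq: "setdist_e (d w) (x w) (F w) = (INF v\<in>D. ennreal (d w (x w) (v w)) + setdist_e (d w) (v w) (F w))"
    if w: "w \<in> space M" for w
  proof -
    interpret Metric_space "X w" "d w" using bf(1)[OF w] .
    have "setdist_e (d w) (x w) (F w) = (INF q\<in>(\<lambda>v. v w) ` D. ennreal (d w (x w) q) + setdist_e (d w) q (F w))"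
      using Dd w DL bf(2) FX[OF w] bf(2)[OF xL w] by (intro setdist_via_dense) auto
    then show ?thesis unfolding image_image .
  qed
  have [measurable]: "\<And>v. v \<in> D \<Longrightarrow> (\<lambda>w. d w (x w) (v w)) \<in> borel_measurable M"
    using DL bf(3) xL by blast
  have [measurable]: "\<And>v. v \<in> D \<Longrightarrow> (\<lambda>w. setdist_e (d w) (v w) (F w)) \<in> borel_measurable M"
    using Dm by blast
  have "(\<lambda>w. INF v\<in>D. ennreal (d w (x w) (v w)) + setdist_e (d w) (v w) (F w)) \<in> borel_measurable M"
    using Dc by measurable
  then show ?thesis using eq by (simp cong: measurable_cong)
qed


lemma ii_i:
  assumes field: "borel_field M X d L"
    and complete: "\<forall>w\<in>space M. Metric_space.mcomplete (X w) (d w)"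
    and closed: "\<forall>w\<in>space M. closedin (Metric_space.mtopology (X w) (d w)) (F w)"
    and II: "\<forall>x\<in>L. (\<lambda>w. setdist_e (d w) (x w) (F w)) \<in> borel_measurable M"
  shows "borel_subfield M X d L F"
proof -
  note bf = basic_facts[OF field]
  define \<Omega>' where "\<Omega>' = {w\<in>space M. F w \<noteq> {}}"
  have FX: "F w \<subseteq> X w" if "w \<in> space M" for w
    using closed that closedin_subset Metric_space.topspace_mtopology[OF bf(1)[OF that]] by metis
  obtain D0 where fund: "fundamental_family M X d L D0" using bf(5) by blast
  have Dc: "countable D0" and DL: "D0 \<subseteq> L" and Dd: "\<forall>w\<in>space M. dense_in (d w) ((\<lambda>x. x w) ` D0) (X w)"
    using fund unfolding fundamental_family_def by auto
  show ?thesis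
  proof (cases "D0 = {}")
    case True
    have "\<Omega>' = {}"
    proof -
      have "X w = {}" if w: "w \<in> space M" for w
      proof (rule equals0I)
        fix p assume "p \<in> X w"
        then show False using Dd w True zero_less_one unfolding dense_in_def by blast
      qed
      then show ?thesis using FX \<Omega>'_def by auto
    qed
    then show ?thesis unfolding borel_subfield_def Let_def \<Omega>'_def[symmetric]
      by (intro conjI exI[of _ "{}"]) auto
  next
    case False
    define e where "e = from_nat_into D0"
    have eL: "e n \<in> L" for n using from_nat_into[OF False] DL e_def by auto
    have dense: "\<exists>n. d w (e n w) p < \<epsilon>" if wpe: "w \<in> space M" "p \<in> X w" "\<epsilon> > 0" for w p \<epsilon>
    proof -
      obtain q where "q \<in> (\<lambda>x. x w) ` D0" "d w q p < \<epsilon>" using Dd wpe unfolding dense_in_def by blast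
      then obtain x where x: "x \<in> D0" "d w (x w) p < \<epsilon>" by auto
      then obtain n where "x = e n" using range_from_nat_into[OF False Dc] e_def by (metis rangeE)
      then show ?thesis using x by blast
    qed
    have [measurable]: "\<And>x. x \<in> L \<Longrightarrow> (\<lambda>w. setdist_e (d w) (x w) (F w)) \<in> borel_measurable M"
      using II by blast
    have sdm[measurable]: "\<And>x. x \<in> L \<Longrightarrow> (\<lambda>w. sdr (d w) (x w) (F w)) \<in> borel_measurable M"
      unfolding sdr_def by measurable
    have \<Omega>eq: "\<Omega>' = {w\<in>space M. setdist_e (d w) (e 0 w) (F w) < top}"
    proof -
      have "F w \<noteq> {} \<longleftrightarrow> setdist_e (d w) (e 0 w) (F w) < top" if w: "w \<in> space M" for w
      proof -
        interpret Metric_space "X w" "d w" using bf(1)[OF w] .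
        show ?thesis using setdist_fin[of "F w" "e 0 w"] setdist_empty[of "e 0 w"]
          by (cases "F w = {}") auto
      qed
      then show ?thesis unfolding \<Omega>'_def by auto
    qed
    have \<Omega>m[measurable]: "\<Omega>' \<in> sets M"
      unfolding \<Omega>eq using eL[of 0] by measurable
    define P where "P c k z n w \<longleftrightarrow> d w (e n w) (z w) < sdr (d w) (z w) (F w) + c / 2 ^ k
        \<and> sdr (d w) (e n w) (F w) < c / 2 ^ Suc k" for c :: real and k z n w
    define step where "step c k z w = (if w \<in> \<Omega>' then e (LEAST n. P c k z n w) w else z w)" for c k z w
    define Z where "Z x c k = rec_nat x (\<lambda>k z. step c k z) k" for x c k
    have Z0: "Z x c 0 = x" for x c unfolding Z_def by simp
    have ZS: "Z x c (Suc k) = step c k (Z x c k)" for x c k unfolding Z_def by simp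
    have Pex: "\<exists>n. P c k z n w" if zL: "z \<in> L" and w: "w \<in> \<Omega>'" and c: "c > 0" for c k z w
    proof -
      have wM: "w \<in> space M" and Fne: "F w \<noteq> {}" using w \<Omega>'_def by auto
      interpret Metric_space "X w" "d w" using bf(1)[OF wM] .
      define \<delta> where "\<delta> = c / 2 ^ Suc k"
      have \<delta>: "\<delta> > 0" using c \<delta>_def by simp
      have zX: "z w \<in> X w" using bf(2)[OF zL wM] .
      obtain q where q: "q \<in> F w" "d w (z w) q < sdr (d w) (z w) (F w) + \<delta>"
        using sdr_approx[OF Fne \<delta>] by blast
      have qX: "q \<in> X w" using q FX[OF wM] by auto
      obtain n where n: "d w (e n w) q < \<delta>" using dense[OF wM qX \<delta>] by blast
      have eX: "e n w \<in> X w" using bf(2)[OF eL wM] .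
      have "d w (e n w) (z w) \<le> d w (e n w) q + d w q (z w)" using triangle eX qX zX by blast
      moreover have "d w q (z w) = d w (z w) q" by (rule commute)
      moreover have "2 * \<delta> = c / 2 ^ k" using \<delta>_def by simp
      moreover have "sdr (d w) (e n w) (F w) \<le> d w (e n w) q" using sdr_le[OF q(1)] .
      ultimately show ?thesis unfolding P_def using q n \<delta>_def by (intro exI[of _ n]) linarith
    qed
    have stepL: "step c k z \<in> L" if zL: "z \<in> L" for c k z
    proof (rule bf(4))
      fix w assume w: "w \<in> space M"
      show "step c k z w \<in> X w" unfolding step_def using bf(2)[OF eL w] bf(2)[OF zL w] by auto
    next
      fix x' assume x'L: "x' \<in> L"
      have [measurable]: "\<And>n. (\<lambda>w. d w (e n w) (z w)) \<in> borel_measurable M"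
        using bf(3) eL zL by blast
      have [measurable]: "\<And>n. (\<lambda>w. sdr (d w) (e n w) (F w)) \<in> borel_measurable M"
        using sdm eL by blast
      have [measurable]: "(\<lambda>w. sdr (d w) (z w) (F w)) \<in> borel_measurable M"
        using sdm zL by blast
      have Pm: "(\<lambda>w. P c k z n w) \<in> measurable M (count_space UNIV)" for n
        unfolding P_def by measurable
      have Lm: "(\<lambda>w. LEAST n. P c k z n w) \<in> measurable M (count_space UNIV)"
        by (rule measurable_Least[OF Pm])
      have m1: "(\<lambda>w. d w (x' w) (e (LEAST n. P c k z n w) w)) \<in> borel_measurable M"
        by (rule measurable_compose_countable[where f="\<lambda>n w. d w (x' w) (e n w)", OF _ Lm])
           (use bf(3) x'L eL in blast)
      have "(\<lambda>w. if w \<in> \<Omega>' then d w (x' w) (e (LEAST n. P c k z n w) w) else d w (x' w) (z w))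
            \<in> borel_measurable M"
        by (rule measurable_If_set[OF m1]) (use bf(3) x'L zL \<Omega>m in auto)
      moreover have "(\<lambda>w. d w (x' w) (step c k z w)) =
          (\<lambda>w. if w \<in> \<Omega>' then d w (x' w) (e (LEAST n. P c k z n w) w) else d w (x' w) (z w))"
        unfolding step_def by auto
      ultimately show "(\<lambda>w. d w (x' w) (step c k z w)) \<in> borel_measurable M" by simp
    qed
    have ZL: "Z x c k \<in> L" if "x \<in> L" for x c k
      by (induction k) (use that stepL in \<open>auto simp: Z0 ZS\<close>)
    have Zout: "Z x c k w = x w" if "w \<notin> \<Omega>'" for x c k w
      by (induction k) (use that in \<open>auto simp: Z0 ZS step_def\<close>)
    have Zin: "sdr (d w) (Z x c (Suc k) w) (F w) < c / 2 ^ Suc k \<and>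
               d w (Z x c (Suc k) w) (Z x c k w) < sdr (d w) (Z x c k w) (F w) + c / 2 ^ k"
      if xL: "x \<in> L" and w: "w \<in> \<Omega>'" and c: "c > 0" for x c k w
    proof -
      have "w \<in> space M" using w \<Omega>'_def by auto
      then interpret Metric_space "X w" "d w" using bf(1) by blast
      define m where "m = (LEAST n. P c k (Z x c k) n w)"
      have Pm: "P c k (Z x c k) m w" unfolding m_def
        by (rule LeastI_ex[OF Pex[OF ZL[OF xL] w c]])
      have Zm: "Z x c (Suc k) w = e m w" using w by (simp add: ZS step_def m_def)
      show ?thesis using Pm unfolding P_def Zm by (simp add: commute)
    qed
    have limex: "\<exists>l. l \<in> F w \<and> limitin (Metric_space.mtopology (X w) (d w)) (\<lambda>k. Z x c k w) l sequentially
        \<and> d w (x w) l \<le> sdr (d w) (x w) (F w) + 3 * c"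
      if xL: "x \<in> L" and w: "w \<in> \<Omega>'" and c: "c > 0" for x c w
    proof -
      have wM: "w \<in> space M" and Fne: "F w \<noteq> {}" using w \<Omega>'_def by auto
      interpret Metric_space "X w" "d w" using bf(1)[OF wM] .
      have "\<exists>l\<in>F w. limitin mtopology (\<lambda>k. Z x c k w) l sequentially \<and>
          d w (Z x c 0 w) l \<le> sdr (d w) (Z x c 0 w) (F w) + 3 * c"
        by (rule iterate_limit[where z="\<lambda>k. Z x c k w"])
           (use complete closed wM Fne c bf(2)[OF ZL[OF xL] wM] Zin[OF xL w c] in auto)
      then show ?thesis by (auto simp: Z0)
    qed
    define lim where "lim x c w = (if w \<in> \<Omega>' then (SOME l. l\<in>F w \<and>
        limitin (Metric_space.mtopology (X w) (d w)) (\<lambda>k. Z x c k w) l sequentially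
        \<and> d w (x w) l \<le> sdr (d w) (x w) (F w) + 3 * c) else x w)" for x c w
    have limP: "lim x c w \<in> F w \<and> limitin (Metric_space.mtopology (X w) (d w)) (\<lambda>k. Z x c k w) (lim x c w) sequentially
        \<and> d w (x w) (lim x c w) \<le> sdr (d w) (x w) (F w) + 3 * c"
      if xL: "x \<in> L" and w: "w \<in> \<Omega>'" and c: "c > 0" for x c w
      unfolding lim_def using w someI_ex[OF limex[OF xL w c]] by simp
    have limL: "lim x c \<in> L" if xL: "x \<in> L" and c: "c > 0" for x c
    proof (rule bf(4))
      fix w assume w: "w \<in> space M"
      show "lim x c w \<in> X w"
      proof (cases "w \<in> \<Omega>'")
        case True then show ?thesis using limP[OF xL True c] FX[OF w] by auto
      next
        case False then show ?thesis using bf(2)[OF xL w] lim_def by simp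
      qed
    next
      fix x' assume x'L: "x' \<in> L"
      show "(\<lambda>w. d w (x' w) (lim x c w)) \<in> borel_measurable M"
      proof (rule borel_measurable_LIMSEQ_real[where u="\<lambda>k w. d w (x' w) (Z x c k w)"])
        fix w assume w: "w \<in> space M"
        show "(\<lambda>k. d w (x' w) (Z x c k w)) \<longlonglongrightarrow> d w (x' w) (lim x c w)"
        proof (cases "w \<in> \<Omega>'")
          case True
          interpret Metric_space "X w" "d w" using bf(1)[OF w] .
          show ?thesis using dist_limit limP[OF xL True c] bf(2)[OF x'L w] by blast
        next
          case False then show ?thesis using Zout[OF False] lim_def by simp
        qed
      next
        fix k show "(\<lambda>w. d w (x' w) (Z x c k w)) \<in> borel_measurable M"
          using bf(3) x'L ZL[OF xL] by blast
      qed
    qed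
    define Y where "Y = (\<lambda>(n, j). lim (e n) (inverse (real (Suc j)))) ` (UNIV :: (nat \<times> nat) set)"
    have YL: "Y \<subseteq> L" unfolding Y_def using limL eL by auto
    show ?thesis
      unfolding borel_subfield_def Let_def \<Omega>'_def[symmetric]
    proof (intro conjI exI[of _ Y])
      show "\<Omega>' \<in> sets M" by (rule \<Omega>m)
      show "countable Y" unfolding Y_def by simp
      show "Y \<subseteq> borel_sections_on \<Omega>' L" using YL unfolding borel_sections_on_def by auto
      show "\<forall>y\<in>Y. \<forall>w\<in>\<Omega>'. y w \<in> F w" unfolding Y_def using limP eL by auto
      show "\<forall>w\<in>\<Omega>'. dense_in (d w) ((\<lambda>y. y w) ` Y) (F w)"
        unfolding dense_in_def
      proof (intro ballI allI impI)
        fix w p and \<epsilon> :: real assume w: "w \<in> \<Omega>'" and p: "p \<in> F w" and \<epsilon>: "\<epsilon> > 0"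
        have wM: "w \<in> space M" using w \<Omega>'_def by auto
        interpret Metric_space "X w" "d w" using bf(1)[OF wM] .
        have pX: "p \<in> X w" using p FX[OF wM] by auto
        obtain n where n: "d w (e n w) p < \<epsilon> / 4" using dense[OF wM pX, of "\<epsilon> / 4"] \<epsilon> by auto
        obtain j where j: "inverse (real (Suc j)) < \<epsilon> / 6" using reals_Archimedean[of "\<epsilon> / 6"] \<epsilon> by auto
        define c where "c = inverse (real (Suc j))"
        have c: "c > 0" using c_def by simp
        define y where "y = lim (e n) c"
        have yY: "y \<in> Y" unfolding Y_def y_def c_def by auto
        have yP: "y w \<in> F w" "d w (e n w) (y w) \<le> sdr (d w) (e n w) (F w) + 3 * c"
          using limP[OF eL w c] y_def by auto
        have yX: "y w \<in> X w" using yP FX[OF wM] by auto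
        have eX: "e n w \<in> X w" using bf(2)[OF eL wM] .
        have "sdr (d w) (e n w) (F w) \<le> d w (e n w) p" by (rule sdr_le[OF p])
        moreover have "d w (y w) p \<le> d w (y w) (e n w) + d w (e n w) p" using triangle yX eX pX by blast
        moreover have "d w (y w) (e n w) = d w (e n w) (y w)" by (rule commute)
        ultimately have "d w (y w) p < \<epsilon>" using yP n j c_def by linarith
        then show "\<exists>q\<in>(\<lambda>y. y w) ` Y. d w q p < \<epsilon>" using yY by blast
      qed
    qed
  qed
qed


theorem mainTheorem5:
  fixes M :: "'w measure" and X :: "'w \<Rightarrow> 'x set" and d :: "'w \<Rightarrow> 'x \<Rightarrow> 'x \<Rightarrow> real"
    and L :: "('w \<Rightarrow> 'x) set" and F :: "'w \<Rightarrow> 'x set"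
  assumes field: "borel_field M X d L"
    and complete: "\<forall>w\<in>space M. Metric_space.mcomplete (X w) (d w)"
    and closed: "\<forall>w\<in>space M. closedin (Metric_space.mtopology (X w) (d w)) (F w)"
  shows "(borel_subfield M X d L F \<longleftrightarrow>
            (\<forall>x\<in>L. (\<lambda>w. setdist_e (d w) (x w) (F w)) \<in> borel_measurable M))
       \<and> ((\<forall>x\<in>L. (\<lambda>w. setdist_e (d w) (x w) (F w)) \<in> borel_measurable M) \<longleftrightarrow>
            (\<exists>D. fundamental_family M X d L D \<and>
                 (\<forall>x\<in>D. (\<lambda>w. setdist_e (d w) (x w) (F w)) \<in> borel_measurable M)))"
proof (intro conjI iffI)
  show "\<forall>x\<in>L. (\<lambda>w. setdist_e (d w) (x w) (F w)) \<in> borel_measurable M"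
    if "borel_subfield M X d L F" using i_ii[OF field closed that] by blast
  show "borel_subfield M X d L F"
    if "\<forall>x\<in>L. (\<lambda>w. setdist_e (d w) (x w) (F w)) \<in> borel_measurable M"
    using ii_i[OF field complete closed that] .
  show "\<exists>D. fundamental_family M X d L D \<and>
                 (\<forall>x\<in>D. (\<lambda>w. setdist_e (d w) (x w) (F w)) \<in> borel_measurable M)"
    if II: "\<forall>x\<in>L. (\<lambda>w. setdist_e (d w) (x w) (F w)) \<in> borel_measurable M"
  proof -
    obtain D where "fundamental_family M X d L D" using basic_facts(5)[OF field] by blast
    moreover then have "D \<subseteq> L" unfolding fundamental_family_def by blast
    ultimately show ?thesis using II by blast
  qed
  show "\<forall>x\<in>L. (\<lambda>w. setdist_e (d w) (x w) (F w)) \<in> borel_measurable M"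
    if "\<exists>D. fundamental_family M X d L D \<and>
                 (\<forall>x\<in>D. (\<lambda>w. setdist_e (d w) (x w) (F w)) \<in> borel_measurable M)"
    using that iii_ii[OF field closed] by blast
qed

end
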